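(* Let $\overline{\mathsf{M}}_s$ be a fine saturated sharp monoid, $r$ a positive integer, and let $\mathfrak X_s$, $\mathfrak X_{s_r}$, $V\subseteq V_r$, $\mathsf{PL}_r$ and $\nabla$ be as in the context. Let $\delta\in\mathbb Z^{V_r}$ be supported on $V$. Let $D,D'\in\mathbb Z^{V_r}$ and $\alpha_D,\alpha_{D'}\in\mathsf{PL}_r$ satisfy $rD=\delta+\nabla\alpha_D$ and $rD'=\delta+\nabla\alpha_{D'}$, with $\alpha_D$ and $\alpha_{D'}$ both vanishing on every vertex of $V$, and suppose $D$ is linearly equivalent to $D'$, i.e. $D'-D\in\nabla(\mathsf{PL}_r)$. Then there exists $\beta\in\mathsf{PL}_r$ vanishing on $V$ with $D'=D+\nabla\beta$.
   Context: $\mathfrak X_s$ is a finite connected graph (loops and multiple edges allowed) with vertex set $V$, each edge $e$ having a length $\ell(e)\in\overline{\mathsf{M}}_s\setminus\{0\}$. Let $\overline{\mathsf{M}}_{s_r}=\tfrac1r\overline{\mathsf{M}}_s\subseteq\overline{\mathsf{M}}_s^{\mathsf{gp}}\otimes\mathbb Q$. $\mathfrak X_{s_r}$ is obtained by subdividing each edge $e$ of $\mathfrak X_s$ into a chain of exactly $r$ edges of length $\ell(e)/r$; its vertex set is $V_r\supseteq V$. $\mathsf{PL}_r$ is the group of functions $\alpha\colon V_r\to\overline{\mathsf{M}}_{s_r}^{\mathsf{gp}}$ with integer slopes: for each edge of $\mathfrak X_{s_r}$ of length $\lambda$ from $u$ to $u'$ there is $k\in\mathbb Z$ with $\alpha(u')-\alpha(u)=k\lambda$.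 Divisors are elements of $\mathbb Z^{V_r}$, and $\nabla\alpha(v)$ is the sum of the outgoing slopes of $\alpha$ along all half-edges at $v$. *)

theory Defs
  imports Complex_Main "HOL-Library.Function_Algebras"
begin

text \<open>The rationalised group of the monoid is modelled inside the rational vector space
  'k => rat (componentwise operations); the monoid is a subset of it.\<close>

definition sc :: "rat \<Rightarrow> ('k \<Rightarrow> rat) \<Rightarrow> ('k \<Rightarrow> rat)" where
  "sc q x = (\<lambda>i. q * x i)"

definition mgp :: "('k \<Rightarrow> rat) set \<Rightarrow> ('k \<Rightarrow> rat) set" where
  "mgp M = {a - b | a b. a \<in> M \<and> b \<in> M}"

text \<open>Fine (finitely generated; integrality is automatic inside a group).\<close>
definition fine_monoid :: "('k \<Rightarrow> rat) set \<Rightarrow> bool" where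
  "fine_monoid M \<longleftrightarrow> (\<exists>G. finite G \<and>
      M = {(\<Sum>g\<in>G. sc (of_nat (c g)) g) | c :: ('k \<Rightarrow> rat) \<Rightarrow> nat. True})"

definition saturated_monoid :: "('k \<Rightarrow> rat) set \<Rightarrow> bool" where
  "saturated_monoid M \<longleftrightarrow>
     (\<forall>x\<in>mgp M. \<forall>m::nat. m > 0 \<longrightarrow> sc (of_nat m) x \<in> M \<longrightarrow> x \<in> M)"

definition sharp_monoid :: "('k \<Rightarrow> rat) set \<Rightarrow> bool" where
  "sharp_monoid M \<longleftrightarrow> (\<forall>x\<in>M. - x \<in> M \<longrightarrow> x = 0)"

definition fs_sharp_monoid :: "('k \<Rightarrow> rat) set \<Rightarrow> bool" where
  "fs_sharp_monoid M \<longleftrightarrow> fine_monoid M \<and> saturated_monoid M \<and> sharp_monoid M"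

definition metric_graph ::
  "('k \<Rightarrow> rat) set \<Rightarrow> 'v set \<Rightarrow> 'e set \<Rightarrow> ('e \<Rightarrow> 'v) \<Rightarrow> ('e \<Rightarrow> 'v) \<Rightarrow> ('e \<Rightarrow> 'k \<Rightarrow> rat) \<Rightarrow> bool" where
  "metric_graph M V E src tgt len \<longleftrightarrow> finite V \<and> finite E \<and>
     (\<forall>e\<in>E. src e \<in> V \<and> tgt e \<in> V \<and> len e \<in> M \<and> len e \<noteq> 0)"

definition connected_graph :: "'v set \<Rightarrow> 'e set \<Rightarrow> ('e \<Rightarrow> 'v) \<Rightarrow> ('e \<Rightarrow> 'v) \<Rightarrow> bool" where
  "connected_graph V E src tgt \<longleftrightarrow> V \<noteq> {} \<and>
     (\<forall>u\<in>V. \<forall>v\<in>V. (\<lambda>x y. \<exists>e\<in>E. (src e = x \<and> tgt e = y) \<or> (src e = y \<and> tgt e = x))\<^sup>*\<^sup>* u v)"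

text \<open>The subdivision X_{s_r}: edge e is replaced by the chain of r edges (e,0),...,(e,r-1);
  chain edge (e,j) goes from node e j to node e (j+1), where the new interior vertices are
  Inr (e,j), 0<j<r, and old vertices are Inl v.\<close>
definition node :: "('e \<Rightarrow> 'v) \<Rightarrow> ('e \<Rightarrow> 'v) \<Rightarrow> nat \<Rightarrow> 'e \<Rightarrow> nat \<Rightarrow> 'v + ('e \<times> nat)" where
  "node src tgt r e j = (if j = 0 then Inl (src e) else if j = r then Inl (tgt e) else Inr (e, j))"

definition sub_vertices :: "'v set \<Rightarrow> 'e set \<Rightarrow> nat \<Rightarrow> ('v + ('e \<times> nat)) set" where
  "sub_vertices V E r = Inl ` V \<union> {Inr (e, j) | e j. e \<in> E \<and> 0 < j \<and> j < r}"

definition sub_edges :: "'e set \<Rightarrow> nat \<Rightarrow> ('e \<times> nat) set" where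
  "sub_edges E r = E \<times> {..<r}"

definition sub_tail :: "('e \<Rightarrow> 'v) \<Rightarrow> ('e \<Rightarrow> 'v) \<Rightarrow> nat \<Rightarrow> 'e \<times> nat \<Rightarrow> 'v + ('e \<times> nat)" where
  "sub_tail src tgt r c = node src tgt r (fst c) (snd c)"

definition sub_head :: "('e \<Rightarrow> 'v) \<Rightarrow> ('e \<Rightarrow> 'v) \<Rightarrow> nat \<Rightarrow> 'e \<times> nat \<Rightarrow> 'v + ('e \<times> nat)" where
  "sub_head src tgt r c = node src tgt r (fst c) (Suc (snd c))"

definition sub_len :: "('e \<Rightarrow> 'k \<Rightarrow> rat) \<Rightarrow> nat \<Rightarrow> 'e \<times> nat \<Rightarrow> 'k \<Rightarrow> rat" where
  "sub_len len r c = sc (1 / of_nat r) (len (fst c))"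

text \<open>PL_r: functions on V_r with values in (M_{s_r})^gp, M_{s_r} = (1/r) M, with integer
  slopes along every edge of the subdivision (extensional: zero off V_r).\<close>
definition PL :: "('k \<Rightarrow> rat) set \<Rightarrow> 'v set \<Rightarrow> 'e set \<Rightarrow> ('e \<Rightarrow> 'v) \<Rightarrow> ('e \<Rightarrow> 'v) \<Rightarrow>
    ('e \<Rightarrow> 'k \<Rightarrow> rat) \<Rightarrow> nat \<Rightarrow> ('v + ('e \<times> nat) \<Rightarrow> 'k \<Rightarrow> rat) set" where
  "PL M V E src tgt len r = {\<alpha>.
     (\<forall>u\<in>sub_vertices V E r. \<alpha> u \<in> mgp (sc (1 / of_nat r) ` M)) \<and>
     (\<forall>u. u \<notin> sub_vertices V E r \<longrightarrow> \<alpha> u = 0) \<and>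
     (\<forall>c\<in>sub_edges E r. \<exists>k::int.
        \<alpha> (sub_head src tgt r c) - \<alpha> (sub_tail src tgt r c) = sc (of_int k) (sub_len len r c))}"

definition slope :: "('e \<Rightarrow> 'v) \<Rightarrow> ('e \<Rightarrow> 'v) \<Rightarrow> ('e \<Rightarrow> 'k \<Rightarrow> rat) \<Rightarrow> nat \<Rightarrow>
    ('v + ('e \<times> nat) \<Rightarrow> 'k \<Rightarrow> rat) \<Rightarrow> 'e \<times> nat \<Rightarrow> int" where
  "slope src tgt len r \<alpha> c = (THE k::int.
     \<alpha> (sub_head src tgt r c) - \<alpha> (sub_tail src tgt r c) = sc (of_int k) (sub_len len r c))"

text \<open>\<nabla>\<alpha>(v): sum of outgoing slopes over all half-edges at v (a loop contributes both halves).\<close>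
definition nabla :: "'v set \<Rightarrow> 'e set \<Rightarrow> ('e \<Rightarrow> 'v) \<Rightarrow> ('e \<Rightarrow> 'v) \<Rightarrow> ('e \<Rightarrow> 'k \<Rightarrow> rat) \<Rightarrow> nat \<Rightarrow>
    ('v + ('e \<times> nat) \<Rightarrow> 'k \<Rightarrow> rat) \<Rightarrow> 'v + ('e \<times> nat) \<Rightarrow> int" where
  "nabla V E src tgt len r \<alpha> u =
     (if u \<in> sub_vertices V E r then
        (\<Sum>c\<in>{c\<in>sub_edges E r. sub_tail src tgt r c = u}. slope src tgt len r \<alpha> c)
      + (\<Sum>c\<in>{c\<in>sub_edges E r. sub_head src tgt r c = u}. - slope src tgt len r \<alpha> c)
      else 0)"

definition divisors :: "'v set \<Rightarrow> 'e set \<Rightarrow> nat \<Rightarrow> ('v + ('e \<times> nat) \<Rightarrow> int) set" where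
  "divisors V E r = {D. \<forall>u. u \<notin> sub_vertices V E r \<longrightarrow> D u = 0}"

end

theory Submission
  imports Defs
begin

lemma sum_fun_apply: "(\<Sum>c\<in>S. (f c :: 'k \<Rightarrow> rat)) i = (\<Sum>c\<in>S. f c i)"
  by (induction S rule: infinite_finite_induct) auto

lemma fine_add:
  fixes M :: "('k \<Rightarrow> rat) set"
  assumes "fine_monoid M" "x \<in> M" "y \<in> M" shows "x + y \<in> M"
proof -
  from assms(1) obtain G where G: "finite G"
    "M = {(\<Sum>g\<in>G. sc (of_nat (c g)) g) | c :: ('k \<Rightarrow> rat) \<Rightarrow> nat. True}"
    unfolding fine_monoid_def by blast
  from assms(2,3) G obtain c1 c2 where x: "x = (\<Sum>g\<in>G. sc (of_nat (c1 g)) g)"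
    and y: "y = (\<Sum>g\<in>G. sc (of_nat (c2 g)) g)" by blast
  have "x + y = (\<Sum>g\<in>G. sc (of_nat ((\<lambda>g. c1 g + c2 g) g)) g)"
    unfolding x y sum.distrib[symmetric]
    by (rule sum.cong) (auto simp: sc_def fun_eq_iff algebra_simps)
  then show ?thesis unfolding G(2) mem_Collect_eq
    by (intro exI[of _ "\<lambda>g. c1 g + c2 g"] conjI TrueI)
qed

lemma fine_zero:
  fixes M :: "('k \<Rightarrow> rat) set"
  assumes "fine_monoid M" shows "0 \<in> M"
proof -
  from assms obtain G where G: "finite G"
    "M = {(\<Sum>g\<in>G. sc (of_nat (c g)) g) | c :: ('k \<Rightarrow> rat) \<Rightarrow> nat. True}"
    unfolding fine_monoid_def by blast
  have "(0::'k \<Rightarrow> rat) = (\<Sum>g\<in>G. sc (of_nat ((\<lambda>g. 0::nat) g)) g)"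
    by (simp add: sc_def fun_eq_iff sum_fun_apply)
  then show ?thesis unfolding G(2) mem_Collect_eq
    by (intro exI[of _ "\<lambda>g. 0::nat"] conjI TrueI)
qed

lemma fine_sum:
  assumes "fine_monoid M" "finite S" "\<forall>c\<in>S. f c \<in> M" shows "sum f S \<in> M"
  using assms(2,3) by (induction S rule: finite_induct) (auto intro: fine_add[OF assms(1)] fine_zero[OF assms(1)])

lemma fine_smult_nat:
  assumes "fine_monoid M" "x \<in> M" shows "sc (of_nat n) x \<in> M"
proof (induction n)
  case 0
  have "sc (of_nat 0) x = 0" by (simp add: sc_def fun_eq_iff)
  then show ?case using fine_zero[OF assms(1)] by metis
next
  case (Suc n)
  have "sc (of_nat (Suc n)) x = x + sc (of_nat n) x" by (simp add: sc_def fun_eq_iff algebra_simps)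
  then show ?case using fine_add[OF assms(1,2) Suc] by metis
qed

lemma fine_smult_int:
  assumes "fine_monoid M" "x \<in> M" "n \<ge> 0" shows "sc (of_int n) x \<in> M"
  using fine_smult_nat[OF assms(1,2), of "nat n"] assms(3) by simp

lemma sharp_sum_zero:
  assumes "fine_monoid M" "sharp_monoid M" "finite S" "\<forall>c\<in>S. f c \<in> M" "sum f S = 0" "c \<in> S"
  shows "f c = 0"
proof -
  have "sum f S = f c + sum f (S - {c})" using assms(3,6) by (simp add: sum.remove)
  then have "- f c = sum f (S - {c})" using assms(5) by (simp add: minus_unique)
  moreover have "sum f (S - {c}) \<in> M" using fine_sum[OF assms(1)] assms(3,4) by auto
  ultimately show ?thesis using assms(2,4,6) unfolding sharp_monoid_def by auto
qed

lemma sc_cancel: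
  assumes "sc a x = sc b x" "x \<noteq> 0" shows "a = b"
proof -
  obtain i where "x i \<noteq> 0" using assms(2) by (auto simp: fun_eq_iff)
  moreover have "a * x i = b * x i" using assms(1) by (auto simp: sc_def fun_eq_iff)
  ultimately show ?thesis by simp
qed

lemma slope_unique:
  assumes "sub_len len r c \<noteq> 0"
    "\<alpha> (sub_head src tgt r c) - \<alpha> (sub_tail src tgt r c) = sc (of_int k) (sub_len len r c)"
  shows "slope src tgt len r \<alpha> c = k"
  unfolding slope_def
proof (rule the_equality)
  fix k' assume "\<alpha> (sub_head src tgt r c) - \<alpha> (sub_tail src tgt r c) = sc (of_int k') (sub_len len r c)"
  then have "sc (of_int k') (sub_len len r c) = sc (of_int k) (sub_len len r c)" using assms(2) by simp
  then have "(of_int k' :: rat) = of_int k" using sc_cancel assms(1) by blast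
  then show "k' = k" by simp
qed (rule assms(2))

lemma edge_vertex_sum:
  fixes k :: "'c \<Rightarrow> int" and f :: "'a \<Rightarrow> rat"
  assumes "finite Vr" "finite Er" "h ` Er \<subseteq> Vr" "t ` Er \<subseteq> Vr"
  shows "(\<Sum>c\<in>Er. of_int (k c) * (f (h c) - f (t c))) =
     - (\<Sum>u\<in>Vr. f u * of_int ((\<Sum>c\<in>{c\<in>Er. t c = u}. k c) + (\<Sum>c\<in>{c\<in>Er. h c = u}. - k c)))"
proof -
  have A: "(\<Sum>c\<in>Er. of_int (k c) * f (h c)) = (\<Sum>u\<in>Vr. f u * of_int (\<Sum>c\<in>{c\<in>Er. h c = u}. k c))"
  proof -
    have "(\<Sum>c\<in>Er. of_int (k c) * f (h c)) = (\<Sum>u\<in>Vr. \<Sum>c\<in>{c. c\<in>Er \<and> h c = u}. of_int (k c) * f (h c))"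
      using sum.group[OF assms(2,1,3), of "\<lambda>c. of_int (k c) * f (h c)"] by simp
    also have "\<dots> = (\<Sum>u\<in>Vr. f u * of_int (\<Sum>c\<in>{c\<in>Er. h c = u}. k c))"
      by (rule sum.cong) (auto simp: sum_distrib_left of_int_sum mult.commute intro!: sum.cong)
    finally show ?thesis .
  qed
  have B: "(\<Sum>c\<in>Er. of_int (k c) * f (t c)) = (\<Sum>u\<in>Vr. f u * of_int (\<Sum>c\<in>{c\<in>Er. t c = u}. k c))"
  proof -
    have "(\<Sum>c\<in>Er. of_int (k c) * f (t c)) = (\<Sum>u\<in>Vr. \<Sum>c\<in>{c. c\<in>Er \<and> t c = u}. of_int (k c) * f (t c))"
      using sum.group[OF assms(2,1,4), of "\<lambda>c. of_int (k c) * f (t c)"] by simp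
    also have "\<dots> = (\<Sum>u\<in>Vr. f u * of_int (\<Sum>c\<in>{c\<in>Er. t c = u}. k c))"
      by (rule sum.cong) (auto simp: sum_distrib_left of_int_sum mult.commute intro!: sum.cong)
    finally show ?thesis .
  qed
  have "(\<Sum>c\<in>Er. of_int (k c) * (f (h c) - f (t c))) =
      (\<Sum>c\<in>Er. of_int (k c) * f (h c)) - (\<Sum>c\<in>Er. of_int (k c) * f (t c))"
    by (simp add: right_diff_distrib sum_subtractf)
  also have "\<dots> = - (\<Sum>u\<in>Vr. f u * of_int ((\<Sum>c\<in>{c\<in>Er. t c = u}. k c) + (\<Sum>c\<in>{c\<in>Er. h c = u}. - k c)))"
    unfolding A B by (simp add: sum_negf distrib_left sum.distrib sum_subtractf right_diff_distrib)
  finally show ?thesis .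
qed

lemma mgp_diff:
  assumes add: "\<And>x y. x \<in> N \<Longrightarrow> y \<in> N \<Longrightarrow> x + y \<in> N"
    and "a \<in> mgp N" "b \<in> mgp N"
  shows "a - b \<in> mgp (N :: ('k \<Rightarrow> rat) set)"
proof -
  obtain a1 a2 where a: "a = a1 - a2" "a1 \<in> N" "a2 \<in> N" using assms(2) unfolding mgp_def by blast
  obtain b1 b2 where b: "b = b1 - b2" "b1 \<in> N" "b2 \<in> N" using assms(3) unfolding mgp_def by blast
  have "a - b = (a1 + b2) - (a2 + b1)" using a b by (simp add: algebra_simps)
  moreover have "a1 + b2 \<in> N" "a2 + b1 \<in> N" using add a b by auto
  ultimately show ?thesis unfolding mgp_def by blast
qed

theorem mainTheorem11:
  fixes M :: "('k::finite \<Rightarrow> rat) set"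
    and V :: "'v set" and E :: "'e set" and src tgt :: "'e \<Rightarrow> 'v"
    and len :: "'e \<Rightarrow> 'k \<Rightarrow> rat" and r :: nat
    and \<delta> D D' :: "'v + ('e \<times> nat) \<Rightarrow> int"
    and \<alpha>D \<alpha>D' :: "'v + ('e \<times> nat) \<Rightarrow> 'k \<Rightarrow> rat"
  assumes "fs_sharp_monoid M"
    and "metric_graph M V E src tgt len"
    and "connected_graph V E src tgt"
    and "r > 0"
    and "\<forall>u. u \<notin> Inl ` V \<longrightarrow> \<delta> u = 0"
    and "D \<in> divisors V E r" and "D' \<in> divisors V E r"
    and "\<alpha>D \<in> PL M V E src tgt len r" and "\<alpha>D' \<in> PL M V E src tgt len r"
    and "(\<lambda>u. int r * D u) = (\<lambda>u. \<delta> u + nabla V E src tgt len r \<alpha>D u)"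
    and "(\<lambda>u. int r * D' u) = (\<lambda>u. \<delta> u + nabla V E src tgt len r \<alpha>D' u)"
    and "\<forall>v\<in>V. \<alpha>D (Inl v) = 0" and "\<forall>v\<in>V. \<alpha>D' (Inl v) = 0"
    and "\<exists>\<gamma>\<in>PL M V E src tgt len r. (\<lambda>u. D' u - D u) = nabla V E src tgt len r \<gamma>"
  shows "\<exists>\<beta>\<in>PL M V E src tgt len r. (\<forall>v\<in>V. \<beta> (Inl v) = 0) \<and>
           D' = (\<lambda>u. D u + nabla V E src tgt len r \<beta> u)"
proof -
  note A = assms
  obtain \<gamma> where \<gamma>PL: "\<gamma> \<in> PL M V E src tgt len r"
    and \<gamma>eq: "(\<lambda>u. D' u - D u) = nabla V E src tgt len r \<gamma>" using A(14) by blast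
  have fine: "fine_monoid M" and sharp: "sharp_monoid M" using A(1) unfolding fs_sharp_monoid_def by auto
  have finV: "finite V" and finE: "finite E"
    and Eprop: "\<And>e. e \<in> E \<Longrightarrow> src e \<in> V \<and> tgt e \<in> V \<and> len e \<in> M \<and> len e \<noteq> 0"
    using A(2) unfolding metric_graph_def by auto
  have rpos: "(of_nat r :: rat) \<noteq> 0" using A(4) by simp
  define Vr where "Vr = sub_vertices V E r"
  define Er where "Er = sub_edges E r"
  define h where "h = sub_head src tgt r"
  define t where "t = sub_tail src tgt r"
  define ell where "ell = sub_len len r"
  define s where "s = slope src tgt len r"
  have Er_iff: "\<And>e j. (e, j) \<in> Er \<longleftrightarrow> e \<in> E \<and> j < r" unfolding Er_def sub_edges_def by auto
  have node_in: "\<And>e j. e \<in> E \<Longrightarrow> j \<le> r \<Longrightarrow> node src tgt r e j \<in> Vr"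
    unfolding Vr_def sub_vertices_def node_def using Eprop by auto
  have finVr: "finite Vr"
  proof -
    have "{Inr (e, j) | e j. e \<in> E \<and> 0 < j \<and> j < r} \<subseteq> (\<lambda>c. Inr c) ` (E \<times> {..<r})" by auto
    moreover have "finite ((\<lambda>c. Inr c) ` (E \<times> {..<r}) :: ('v + ('e \<times> nat)) set)" using finE by auto
    ultimately show ?thesis unfolding Vr_def sub_vertices_def using finV finite_subset by blast
  qed
  have finEr: "finite Er" unfolding Er_def sub_edges_def using finE by auto
  have hEr: "h ` Er \<subseteq> Vr" unfolding h_def sub_head_def using node_in Er_iff by auto
  have tEr: "t ` Er \<subseteq> Vr" unfolding t_def sub_tail_def using node_in Er_iff by auto
  have lnz: "\<And>c. c \<in> Er \<Longrightarrow> ell c \<noteq> 0"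
  proof
    fix c assume c: "c \<in> Er" "ell c = 0"
    then have "fst c \<in> E" using Er_iff by (cases c) auto
    then have "len (fst c) \<noteq> 0" using Eprop by auto
    moreover have "\<And>i. len (fst c) i = 0"
    proof -
      fix i have "(1 / of_nat r) * len (fst c) i = 0" using c(2) unfolding ell_def sub_len_def sc_def
        by (metis zero_fun_apply)
      then show "len (fst c) i = 0" using rpos by simp
    qed
    ultimately show False by (auto simp: fun_eq_iff)
  qed
  have slope_PL: "\<And>\<alpha> c. \<alpha> \<in> PL M V E src tgt len r \<Longrightarrow> c \<in> Er \<Longrightarrow>
      \<alpha> (h c) - \<alpha> (t c) = sc (of_int (s \<alpha> c)) (ell c)"
  proof -
    fix \<alpha> c assume a: "\<alpha> \<in> PL M V E src tgt len r" "c \<in> Er"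
    then obtain k :: int where k: "\<alpha> (h c) - \<alpha> (t c) = sc (of_int k) (ell c)"
      unfolding PL_def Er_def h_def t_def ell_def by blast
    have "s \<alpha> c = k" unfolding s_def using slope_unique[of len r c \<alpha> src tgt k] k lnz[OF a(2)]
      unfolding h_def t_def ell_def by simp
    then show "\<alpha> (h c) - \<alpha> (t c) = sc (of_int (s \<alpha> c)) (ell c)" using k by simp
  qed
  have slope_eq: "\<And>\<alpha> c k. c \<in> Er \<Longrightarrow> \<alpha> (h c) - \<alpha> (t c) = sc (of_int k) (ell c) \<Longrightarrow> s \<alpha> c = k"
    unfolding s_def h_def t_def ell_def using slope_unique lnz unfolding ell_def by blast
  have nabla_eq: "\<And>\<alpha> u. u \<in> Vr \<Longrightarrow> nabla V E src tgt len r \<alpha> u =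
      (\<Sum>c\<in>{c\<in>Er. t c = u}. s \<alpha> c) + (\<Sum>c\<in>{c\<in>Er. h c = u}. - s \<alpha> c)"
    unfolding nabla_def Vr_def Er_def t_def h_def s_def by simp
  have nabla_out: "\<And>\<alpha> u. u \<notin> Vr \<Longrightarrow> nabla V E src tgt len r \<alpha> u = 0"
    unfolding nabla_def Vr_def by simp
  define \<phi> where "\<phi> = (\<lambda>u. \<alpha>D' u - \<alpha>D u - sc (of_nat r) (\<gamma> u))"
  define k\<phi> where "k\<phi> = (\<lambda>c. s \<alpha>D' c - s \<alpha>D c - int r * s \<gamma> c)"
  have \<phi>slope: "\<And>c. c \<in> Er \<Longrightarrow> \<phi> (h c) - \<phi> (t c) = sc (of_int (k\<phi> c)) (ell c)"
  proof -
    fix c assume c: "c \<in> Er"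
    have e1: "\<And>i. \<alpha>D' (h c) i - \<alpha>D' (t c) i = of_int (s \<alpha>D' c) * ell c i"
      using slope_PL[OF A(9) c] by (simp add: fun_eq_iff sc_def)
    have e2: "\<And>i. \<alpha>D (h c) i - \<alpha>D (t c) i = of_int (s \<alpha>D c) * ell c i"
      using slope_PL[OF A(8) c] by (simp add: fun_eq_iff sc_def)
    have e3: "\<And>i. \<gamma> (h c) i - \<gamma> (t c) i = of_int (s \<gamma> c) * ell c i"
      using slope_PL[OF \<gamma>PL c] by (simp add: fun_eq_iff sc_def)
    show "\<phi> (h c) - \<phi> (t c) = sc (of_int (k\<phi> c)) (ell c)"
    proof (rule ext)
      fix i
      have "(\<phi> (h c) - \<phi> (t c)) i = (\<alpha>D' (h c) i - \<alpha>D' (t c) i) - (\<alpha>D (h c) i - \<alpha>D (t c) i)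
          - of_nat r * (\<gamma> (h c) i - \<gamma> (t c) i)"
        unfolding \<phi>_def by (simp add: sc_def algebra_simps)
      also have "\<dots> = sc (of_int (k\<phi> c)) (ell c) i"
        unfolding e1 e2 e3 k\<phi>_def sc_def by (simp add: algebra_simps)
      finally show "(\<phi> (h c) - \<phi> (t c)) i = sc (of_int (k\<phi> c)) (ell c) i" .
    qed
  qed
  have s\<phi>: "\<And>c. c \<in> Er \<Longrightarrow> s \<phi> c = k\<phi> c" using slope_eq \<phi>slope by blast
  have nabla\<phi>: "\<And>u. u \<in> Vr \<Longrightarrow> nabla V E src tgt len r \<phi> u = 0"
  proof -
    fix u assume u: "u \<in> Vr"
    have lin: "\<And>P. (\<Sum>c\<in>{c\<in>Er. P c}. s \<phi> c) = (\<Sum>c\<in>{c\<in>Er. P c}. s \<alpha>D' c)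
        - (\<Sum>c\<in>{c\<in>Er. P c}. s \<alpha>D c) - int r * (\<Sum>c\<in>{c\<in>Er. P c}. s \<gamma> c)"
    proof -
      fix P
      have "(\<Sum>c\<in>{c\<in>Er. P c}. s \<phi> c) = (\<Sum>c\<in>{c\<in>Er. P c}. k\<phi> c)" using s\<phi> by auto
      then show "?thesis P" unfolding k\<phi>_def by (simp add: sum_subtractf sum_distrib_left)
    qed
    have n1: "nabla V E src tgt len r \<alpha>D' u = int r * D' u - \<delta> u" using A(11) by (simp add: fun_eq_iff)
    have n2: "nabla V E src tgt len r \<alpha>D u = int r * D u - \<delta> u" using A(10) by (simp add: fun_eq_iff)
    have n3: "nabla V E src tgt len r \<gamma> u = D' u - D u" using \<gamma>eq by (simp add: fun_eq_iff)
    have "nabla V E src tgt len r \<phi> u = nabla V E src tgt len r \<alpha>D' u - nabla V E src tgt len r \<alpha>D u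
        - int r * nabla V E src tgt len r \<gamma> u"
      unfolding nabla_eq[OF u] sum_negf lin by (simp add: sum_negf algebra_simps)
    then show "nabla V E src tgt len r \<phi> u = 0" unfolding n1 n2 n3 by (simp add: algebra_simps)
  qed
  have energy: "\<And>i. (\<Sum>c\<in>Er. sc (of_int (k\<phi> c ^ 2)) (len (fst c))) i = 0"
  proof -
    fix i
    have "(\<Sum>c\<in>Er. of_int (s \<phi> c) * (\<phi> (h c) i - \<phi> (t c) i)) =
       - (\<Sum>u\<in>Vr. \<phi> u i * of_int ((\<Sum>c\<in>{c\<in>Er. t c = u}. s \<phi> c) + (\<Sum>c\<in>{c\<in>Er. h c = u}. - s \<phi> c)))"
      by (rule edge_vertex_sum[OF finVr finEr hEr tEr])
    also have "\<dots> = 0" using nabla\<phi> nabla_eq by simp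
    finally have z: "(\<Sum>c\<in>Er. of_int (s \<phi> c) * (\<phi> (h c) i - \<phi> (t c) i)) = 0" .
    have "(\<Sum>c\<in>Er. of_int (s \<phi> c) * (\<phi> (h c) i - \<phi> (t c) i))
        = (\<Sum>c\<in>Er. (1 / of_nat r) * (of_int (k\<phi> c ^ 2) * len (fst c) i))"
    proof (rule sum.cong)
      fix c assume c: "c \<in> Er"
      have "\<phi> (h c) i - \<phi> (t c) i = of_int (k\<phi> c) * ((1 / of_nat r) * len (fst c) i)"
        using \<phi>slope[OF c] by (simp add: fun_eq_iff sc_def ell_def sub_len_def)
      then show "of_int (s \<phi> c) * (\<phi> (h c) i - \<phi> (t c) i) = (1 / of_nat r) * (of_int (k\<phi> c ^ 2) * len (fst c) i)"
        using s\<phi>[OF c] by (simp add: power2_eq_square)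
    qed simp
    also have "\<dots> = (1 / of_nat r) * (\<Sum>c\<in>Er. sc (of_int (k\<phi> c ^ 2)) (len (fst c))) i"
      by (simp add: sum_distrib_left sum_fun_apply sc_def)
    finally show "(\<Sum>c\<in>Er. sc (of_int (k\<phi> c ^ 2)) (len (fst c))) i = 0" using z rpos by simp
  qed
  have kz: "\<And>c. c \<in> Er \<Longrightarrow> k\<phi> c = 0"
  proof -
    fix c assume c: "c \<in> Er"
    have inM: "\<forall>c\<in>Er. sc (of_int (k\<phi> c ^ 2)) (len (fst c)) \<in> M"
    proof
      fix c assume "c \<in> Er"
      then have "fst c \<in> E" using Er_iff by (cases c) auto
      then show "sc (of_int (k\<phi> c ^ 2)) (len (fst c)) \<in> M" using fine_smult_int[OF fine, of "len (fst c)" "k\<phi> c ^ 2"] Eprop by simp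
    qed
    have "(\<Sum>c\<in>Er. sc (of_int (k\<phi> c ^ 2)) (len (fst c))) = 0" using energy by (simp add: fun_eq_iff)
    then have "sc (of_int (k\<phi> c ^ 2)) (len (fst c)) = sc 0 (len (fst c))"
      using sharp_sum_zero[OF fine sharp finEr inM _ c] by (simp add: sc_def fun_eq_iff)
    moreover have "fst c \<in> E" using c Er_iff by (cases c) auto
    ultimately have "(of_int (k\<phi> c ^ 2) :: rat) = 0" using sc_cancel Eprop by blast
    then show "k\<phi> c = 0" by simp
  qed
  have \<phi>const: "\<And>c. c \<in> Er \<Longrightarrow> \<phi> (h c) = \<phi> (t c)"
  proof -
    fix c assume c: "c \<in> Er"
    have "\<phi> (h c) - \<phi> (t c) = 0" using \<phi>slope[OF c] kz[OF c] by (simp add: sc_def fun_eq_iff)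
    then show "\<phi> (h c) = \<phi> (t c)" by simp
  qed
  have chain: "\<And>e j. e \<in> E \<Longrightarrow> j \<le> r \<Longrightarrow> \<phi> (node src tgt r e j) = \<phi> (Inl (src e))"
  proof -
    fix e j assume e: "e \<in> E"
    show "j \<le> r \<Longrightarrow> \<phi> (node src tgt r e j) = \<phi> (Inl (src e))"
    proof (induction j)
      case 0 then show ?case by (simp add: node_def)
    next
      case (Suc j)
      have "(e, j) \<in> Er" using Er_iff e Suc.prems by auto
      from \<phi>const[OF this] have "\<phi> (node src tgt r e (Suc j)) = \<phi> (node src tgt r e j)"
        unfolding h_def t_def sub_head_def sub_tail_def by simp
      then show ?case using Suc by simp
    qed
  qed
  have \<phi>V: "\<And>u. u \<in> Vr \<Longrightarrow> \<exists>w\<in>V. \<phi> u = \<phi> (Inl w)"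
  proof -
    fix u assume "u \<in> Vr"
    then consider w where "w \<in> V" "u = Inl w" | e j where "e \<in> E" "0 < j" "j < r" "u = Inr (e, j)"
      unfolding Vr_def sub_vertices_def by blast
    then show "\<exists>w\<in>V. \<phi> u = \<phi> (Inl w)"
    proof cases
      case 1 then show ?thesis by blast
    next
      case 2
      then have "node src tgt r e j = u" unfolding node_def by simp
      then show ?thesis using chain[of e j] 2 Eprop by force
    qed
  qed
  have \<phi>Inl: "\<And>w. w \<in> V \<Longrightarrow> \<phi> (Inl w) = - sc (of_nat r) (\<gamma> (Inl w))"
    unfolding \<phi>_def using A(12,13) by simp
  define \<beta> where "\<beta> = (\<lambda>u. if u \<in> Vr then sc (1 / of_nat r) (\<alpha>D' u - \<alpha>D u) else 0)"
  have \<beta>\<phi>: "\<And>u. u \<in> Vr \<Longrightarrow> \<beta> u = \<gamma> u + sc (1 / of_nat r) (\<phi> u)"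
    unfolding \<beta>_def \<phi>_def using rpos by (simp add: fun_eq_iff sc_def field_simps)
  have \<beta>slope: "\<And>c. c \<in> Er \<Longrightarrow> \<beta> (h c) - \<beta> (t c) = sc (of_int (s \<gamma> c)) (ell c)"
  proof -
    fix c assume c: "c \<in> Er"
    have "\<beta> (h c) - \<beta> (t c) = \<gamma> (h c) - \<gamma> (t c)"
    proof -
      have "h c \<in> Vr" "t c \<in> Vr" using hEr tEr c by auto
      then show ?thesis using \<beta>\<phi> \<phi>const[OF c] by simp
    qed
    then show "\<beta> (h c) - \<beta> (t c) = sc (of_int (s \<gamma> c)) (ell c)" using slope_PL[OF \<gamma>PL c] by simp
  qed
  have s\<beta>: "\<And>c. c \<in> Er \<Longrightarrow> s \<beta> c = s \<gamma> c" using slope_eq \<beta>slope by blast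
  have nabla\<beta>: "\<And>u. nabla V E src tgt len r \<beta> u = nabla V E src tgt len r \<gamma> u"
  proof -
    fix u show "nabla V E src tgt len r \<beta> u = nabla V E src tgt len r \<gamma> u"
    proof (cases "u \<in> Vr")
      case True
      then show ?thesis unfolding nabla_eq[OF True] using s\<beta> by (auto intro!: sum.cong arg_cong2[where f="(+)"])
    next
      case False then show ?thesis using nabla_out by simp
    qed
  qed
  let ?N = "sc (1 / of_nat r) ` M"
  have Nadd: "\<And>x y. x \<in> ?N \<Longrightarrow> y \<in> ?N \<Longrightarrow> x + y \<in> ?N"
  proof -
    fix x y assume "x \<in> ?N" "y \<in> ?N"
    then obtain a b where "a \<in> M" "b \<in> M" "x = sc (1 / of_nat r) a" "y = sc (1 / of_nat r) b" by blast
    then have "x + y = sc (1 / of_nat r) (a + b)" "a + b \<in> M"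
      using fine_add[OF fine] by (auto simp: sc_def fun_eq_iff algebra_simps)
    then show "x + y \<in> ?N" by blast
  qed
  have \<beta>PL: "\<beta> \<in> PL M V E src tgt len r"
    unfolding PL_def mem_Collect_eq
  proof (intro conjI ballI allI impI)
    fix u assume u: "u \<in> sub_vertices V E r"
    then have u': "u \<in> Vr" unfolding Vr_def .
    then obtain w where w: "w \<in> V" "\<phi> u = \<phi> (Inl w)" using \<phi>V by blast
    have "\<beta> u = \<gamma> u - \<gamma> (Inl w)"
      using \<beta>\<phi>[OF u'] w \<phi>Inl[OF w(1)] rpos by (simp add: fun_eq_iff sc_def)
    moreover have "\<gamma> u \<in> mgp ?N" using \<gamma>PL u unfolding PL_def by blast
    moreover have "\<gamma> (Inl w) \<in> mgp ?N" using \<gamma>PL w(1) unfolding PL_def sub_vertices_def by blast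
    ultimately show "\<beta> u \<in> mgp ?N" using mgp_diff[OF Nadd] by simp
  next
    fix u assume "u \<notin> sub_vertices V E r"
    then show "\<beta> u = 0" unfolding \<beta>_def Vr_def by simp
  next
    fix c assume "c \<in> sub_edges E r"
    then have c: "c \<in> Er" unfolding Er_def .
    show "\<exists>k::int. \<beta> (sub_head src tgt r c) - \<beta> (sub_tail src tgt r c) = sc (of_int k) (sub_len len r c)"
      using \<beta>slope[OF c] unfolding h_def t_def ell_def by blast
  qed
  have \<beta>V: "\<forall>v\<in>V. \<beta> (Inl v) = 0"
    unfolding \<beta>_def using A(12,13) by (simp add: sc_def fun_eq_iff)
  have "D' = (\<lambda>u. D u + nabla V E src tgt len r \<beta> u)"
    using \<gamma>eq nabla\<beta> by (auto simp: fun_eq_iff) (metis add_diff_cancel_left' diff_add_cancel)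
  then show ?thesis using \<beta>PL \<beta>V by blast
qed

end
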